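(* Let $q>p-1$, and let $\Sigma_q\subseteq(0,+\infty)$ be the set of $\lambda>0$ for which $(\mathcal E_\lambda)$ admits a weak solution. Assume $\inf\Sigma_q=0$. Then for any choice of weak solutions $u_\lambda$ of $(\mathcal E_\lambda)$, $\lambda\in\Sigma_q$, one has $\|u_\lambda\|_{L^\infty(\Omega)}\to+\infty$ as $\lambda\to0$, $\lambda\in\Sigma_q$.
   Context: Standing setting: $\Omega\subset\mathbb R^d$, $d\ge2$, bounded regular domain; $s\in(0,1)$, $p\in(1,\infty)$; $\langle(-\Delta)^s_pu,\phi\rangle=\int_{\mathbb R^{2d}}\frac{|u(x)-u(y)|^{p-2}(u(x)-u(y))(\phi(x)-\phi(y))}{|x-y|^{d+sp}}$; $W^{s,p}_0(\Omega)$ = functions in $L^p(\mathbb R^d)$ vanishing a.e. off $\Omega$ with finite seminorm $\big(\int_{\mathbb R^{2d}}\frac{|u(x)-u(y)|^p}{|x-y|^{d+sp}}\big)^{1/p}$. Parameters $r>p-1$; $b\in L^\infty(\Omega)$, $b\ge0$, $b\not\equiv0$, $b^{-1}(\{0\})=\overline{\Omega_0}$ with $\Omega_0\subset\Omega$ a $C^{1,1}$ open set, $|\Omega_0|>0$. Problem $(\mathcal E_\lambda)$: $(-\Delta)^s_pu=\lambda u^q-bu^r$ in $\Omega$, $u=0$ off $\Omega$, $u>0$ in $\Omega$; a weak solution is a positive $u\in W^{s,p}_0(\Omega)$ with $\langle(-\Delta)^s_pu,\phi\rangle=\int_\Omega(\lambda u^q-bu^r)\phi$ for all $\phi\in W^{s,p}_0(\Omega)$.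 *)

theory Defs
  imports "HOL-Analysis.Analysis" "HOL-Probability.Essential_Supremum"
begin

text \<open>Open sets of class C^{1,1}: near every boundary point the set is, in suitable
  orthonormal coordinates (unit direction e), the strict epigraph of a C^{1,1} function
  of the d-1 variables orthogonal to e (g is evaluated on the orthogonal projection).\<close>
definition C11_open :: "'a::euclidean_space set \<Rightarrow> bool" where
  "C11_open U \<longleftrightarrow> open U \<and>
     (\<forall>z\<in>frontier U. \<exists>r>0. \<exists>e::'a. norm e = 1 \<and>
        (\<exists>(g::'a \<Rightarrow> real) (G::'a \<Rightarrow> 'a) (L::real).
           (\<forall>x. (g has_derivative (\<lambda>h. G x \<bullet> h)) (at x)) \<and>
           L-lipschitz_on UNIV G \<and>
           U \<inter> ball z r = {x \<in> ball z r. x \<bullet> e > g (x - (x \<bullet> e) *\<^sub>R e)}))"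

definition gagliardo :: "real \<Rightarrow> real \<Rightarrow> ('a::euclidean_space \<Rightarrow> real) \<Rightarrow> ennreal" where
  "gagliardo s p u =
     (\<integral>\<^sup>+ z. ennreal (\<bar>u (fst z) - u (snd z)\<bar> powr p
                 / norm (fst z - snd z) powr (real DIM('a) + s * p)) \<partial>(lebesgue \<Otimes>\<^sub>M lebesgue))"

definition W0 :: "real \<Rightarrow> real \<Rightarrow> 'a::euclidean_space set \<Rightarrow> ('a \<Rightarrow> real) set" where
  "W0 s p \<Omega> = {u. u \<in> borel_measurable lebesgue \<and>
                  integrable lebesgue (\<lambda>x. \<bar>u x\<bar> powr p) \<and>
                  (AE x in lebesgue. x \<notin> \<Omega> \<longrightarrow> u x = 0) \<and>
                  gagliardo s p u < \<infinity>}"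

definition frac_pLap :: "real \<Rightarrow> real \<Rightarrow> ('a::euclidean_space \<Rightarrow> real) \<Rightarrow> ('a \<Rightarrow> real) \<Rightarrow> real" where
  "frac_pLap s p u \<phi> =
     (\<integral> z. \<bar>u (fst z) - u (snd z)\<bar> powr (p - 2) * (u (fst z) - u (snd z))
            * (\<phi> (fst z) - \<phi> (snd z))
            / norm (fst z - snd z) powr (real DIM('a) + s * p) \<partial>(lebesgue \<Otimes>\<^sub>M lebesgue))"

definition weak_sol ::
  "real \<Rightarrow> real \<Rightarrow> real \<Rightarrow> real \<Rightarrow> ('a::euclidean_space \<Rightarrow> real) \<Rightarrow> 'a set \<Rightarrow> real \<Rightarrow> ('a \<Rightarrow> real) \<Rightarrow> bool" where
  "weak_sol s p q r b \<Omega> lam u \<longleftrightarrow>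
     u \<in> W0 s p \<Omega> \<and> (AE x in lebesgue. x \<in> \<Omega> \<longrightarrow> u x > 0) \<and>
     (\<forall>\<phi>\<in>W0 s p \<Omega>.
        set_integrable lebesgue \<Omega> (\<lambda>x. (lam * u x powr q - b x * u x powr r) * \<phi> x) \<and>
        frac_pLap s p u \<phi> = (LINT x:\<Omega>|lebesgue. (lam * u x powr q - b x * u x powr r) * \<phi> x))"

definition Sigma_q ::
  "real \<Rightarrow> real \<Rightarrow> real \<Rightarrow> real \<Rightarrow> ('a::euclidean_space \<Rightarrow> real) \<Rightarrow> 'a set \<Rightarrow> real set" where
  "Sigma_q s p q r b \<Omega> = {lam. lam > 0 \<and> (\<exists>u. weak_sol s p q r b \<Omega> lam u)}"

definition Linf_norm :: "'a::euclidean_space set \<Rightarrow> ('a \<Rightarrow> real) \<Rightarrow> ereal" where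
  "Linf_norm \<Omega> u = esssup lebesgue (\<lambda>x. ereal (indicator \<Omega> x * \<bar>u x\<bar>))"

end

theory Submission
  imports Defs
begin

lemma sf_leb: "sigma_finite_measure (lebesgue :: 'a::euclidean_space measure)"
proof -
  obtain A where A: "countable A" "A \<subseteq> sets (lborel::'a measure)" "\<Union>A = space lborel" "\<forall>a\<in>A. emeasure lborel a \<noteq> \<infinity>"
    using sigma_finite_measure.sigma_finite_countable[OF sigma_finite_lborel] by blast
  show ?thesis
    apply (rule sigma_finite_measure.intro)
    apply (rule exI[of _ A])
    using A by (auto simp: subset_eq)
qed

lemma id_leb: "(\<lambda>x. x) \<in> (lebesgue::'a::euclidean_space measure) \<rightarrow>\<^sub>M borel"
  by (intro measurable_completion) simp

lemma meas_F:
  fixes u :: "'a::euclidean_space \<Rightarrow> real"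
  assumes "u \<in> borel_measurable lebesgue"
  shows "(\<lambda>z. \<bar>u (fst z) - u (snd z)\<bar> powr p / norm (fst z - snd z) powr (real DIM('a) + s * p))
      \<in> borel_measurable (lebesgue \<Otimes>\<^sub>M lebesgue)"
proof -
  have f: "fst \<in> (lebesgue \<Otimes>\<^sub>M lebesgue) \<rightarrow>\<^sub>M (borel::'a measure)"
    by (rule measurable_compose[OF measurable_fst id_leb])
  have g: "snd \<in> (lebesgue \<Otimes>\<^sub>M lebesgue) \<rightarrow>\<^sub>M (borel::'a measure)"
    by (rule measurable_compose[OF measurable_snd id_leb])
  have u1: "(\<lambda>z. u (fst z)) \<in> borel_measurable (lebesgue \<Otimes>\<^sub>M lebesgue)"
    using measurable_compose[OF measurable_fst assms] .
  have u2: "(\<lambda>z. u (snd z)) \<in> borel_measurable (lebesgue \<Otimes>\<^sub>M lebesgue)"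
    using measurable_compose[OF measurable_snd assms] .
  show ?thesis using f g u1 u2 by measurable
qed

lemma poincare:
  fixes \<Omega> :: "'a::euclidean_space set"
  assumes bd: "bounded \<Omega>" and op: "open \<Omega>" and sp: "0 < s" "0 < p"
  shows "\<exists>c>0. \<forall>u. u \<in> borel_measurable lebesgue \<longrightarrow> (AE x in lebesgue. x \<notin> \<Omega> \<longrightarrow> u x = 0) \<longrightarrow>
     ennreal c * (\<integral>\<^sup>+x. indicator \<Omega> x * ennreal (\<bar>u x\<bar> powr p) \<partial>lebesgue) \<le> gagliardo s p u"
proof -
  define ex where "ex = real DIM('a) + s * p"
  have ex0: "ex > 0" unfolding ex_def using sp by (simp add: add_pos_pos)
  obtain R where R: "R > 0" "\<Omega> \<subseteq> ball 0 R" using bd bounded_subset_ballD by blast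
  obtain e :: 'a where e: "e \<in> Basis" by (meson ex_in_conv nonempty_Basis)
  have ne: "norm e = 1" using e by simp
  define a where "a = (2*R+1) *\<^sub>R e"
  have na: "norm a = 2*R+1" unfolding a_def using ne R by simp
  define A where "A = ball a 1"
  define D where "D = 3*R+2"
  define K where "K = D powr ex"
  have K0: "K > 0" unfolding K_def D_def using R by simp
  have geo: "x \<noteq> y \<and> norm (x - y) \<le> D" if "x \<in> \<Omega>" "y \<in> A" for x y
  proof -
    have nx: "norm x < R" using R that by auto
    have "dist a y < 1" using that A_def by auto
    hence "norm (a - y) < 1" by (simp add: dist_norm)
    hence ny1: "norm y > 2*R" "norm y < 2*R+2" using na norm_triangle_ineq2[of a y] norm_triangle_ineq4[of a "a - y"] by auto
    have "norm (x - y) \<le> norm x + norm y" by (rule norm_triangle_ineq4)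
    thus ?thesis using nx ny1 R unfolding D_def by auto
  qed
  define c where "c = measure lborel A / K"
  have cpos: "c > 0" unfolding c_def A_def using K0 content_ball_pos[of 1 a] by simp
  have disj: "A \<inter> \<Omega> = {}" using geo by blast
  have mA: "emeasure lebesgue A = ennreal (measure lborel A)"
    unfolding A_def using emeasure_lborel_ball_finite[of a 1]
    by (simp add: emeasure_eq_ennreal_measure)
  show ?thesis
  proof (intro exI[of _ c] conjI allI impI cpos)
    fix u :: "'a \<Rightarrow> real"
    assume um: "u \<in> borel_measurable lebesgue" and u0: "AE x in lebesgue. x \<notin> \<Omega> \<longrightarrow> u x = 0"
    interpret L: sigma_finite_measure "lebesgue :: 'a measure" by (rule sf_leb)
    define F where "F = (\<lambda>z::'a\<times>'a. ennreal (\<bar>u (fst z) - u (snd z)\<bar> powr p / norm (fst z - snd z) powr (real DIM('a) + s * p)))"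
    have Fm: "F \<in> borel_measurable (lebesgue \<Otimes>\<^sub>M lebesgue)"
      unfolding F_def using meas_F[OF um] by measurable
    have G: "gagliardo s p u = (\<integral>\<^sup>+ x. \<integral>\<^sup>+ y. F (x, y) \<partial>lebesgue \<partial>lebesgue)"
      unfolding gagliardo_def F_def[symmetric] using L.nn_integral_fst[OF Fm] by simp
    have inner: "ennreal c * (indicator \<Omega> x * ennreal (\<bar>u x\<bar> powr p)) \<le> (\<integral>\<^sup>+ y. F (x, y) \<partial>lebesgue)" for x
    proof (cases "x \<in> \<Omega>")
      case False thus ?thesis by simp
    next
      case True
      have "(\<integral>\<^sup>+ y. ennreal (\<bar>u x\<bar> powr p / K) * indicator A y \<partial>lebesgue) \<le> (\<integral>\<^sup>+ y. F (x, y) \<partial>lebesgue)"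
      proof (rule nn_integral_mono_AE)
        show "AE y in lebesgue. ennreal (\<bar>u x\<bar> powr p / K) * indicator A y \<le> F (x, y)"
          using u0
        proof eventually_elim
          case (elim y)
          show ?case
          proof (cases "y \<in> A")
            case False thus ?thesis by simp
          next
            case yA: True
            hence uy: "u y = 0" using elim disj by auto
            have g: "x \<noteq> y" "norm (x - y) \<le> D" using geo[OF True yA] by auto
            have np: "norm (x - y) powr ex > 0" using g by simp
            have "norm (x - y) powr ex \<le> K" unfolding K_def
              using g ex0 by (intro powr_mono2) auto
            hence "\<bar>u x\<bar> powr p / K \<le> \<bar>u x\<bar> powr p / norm (x - y) powr ex"
              using np K0 by (intro divide_left_mono) auto
            thus ?thesis using yA uy unfolding F_def ex_def by (simp add: ennreal_leI)
          qed
        qed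
      qed
      moreover have "(\<integral>\<^sup>+ y. ennreal (\<bar>u x\<bar> powr p / K) * indicator A y \<partial>lebesgue)
          = ennreal (\<bar>u x\<bar> powr p / K) * emeasure lebesgue A"
        unfolding A_def by (rule nn_integral_cmult_indicator) simp
      moreover have "ennreal (\<bar>u x\<bar> powr p / K) * emeasure lebesgue A = ennreal c * (indicator \<Omega> x * ennreal (\<bar>u x\<bar> powr p))"
        using True K0 unfolding mA c_def
        by (simp add: ennreal_mult'[symmetric] mult.commute)
      ultimately show ?thesis by simp
    qed
    have "ennreal c * (\<integral>\<^sup>+x. indicator \<Omega> x * ennreal (\<bar>u x\<bar> powr p) \<partial>lebesgue)
        = (\<integral>\<^sup>+x. ennreal c * (indicator \<Omega> x * ennreal (\<bar>u x\<bar> powr p)) \<partial>lebesgue)"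
    proof (rule nn_integral_cmult[symmetric])
      have "\<Omega> \<in> sets lebesgue" using op by simp
      thus "(\<lambda>x. indicator \<Omega> x * ennreal (\<bar>u x\<bar> powr p)) \<in> borel_measurable lebesgue"
        using um by measurable
    qed
    also have "\<dots> \<le> gagliardo s p u" unfolding G by (intro nn_integral_mono inner)
    finally show "ennreal c * (\<integral>\<^sup>+x. indicator \<Omega> x * ennreal (\<bar>u x\<bar> powr p) \<partial>lebesgue) \<le> gagliardo s p u" .
  qed
qed
lemma key:
  fixes \<Omega> :: "'a::euclidean_space set" and v :: "'a \<Rightarrow> real"
  assumes ws: "weak_sol s p q r b \<Omega> lam v" and lam: "lam > 0"
    and Mb: "Linf_norm \<Omega> v \<le> ereal M" and M: "M > 0"
    and cpos: "c > 0"
    and P: "\<forall>u. u \<in> borel_measurable lebesgue \<longrightarrow> (AE x in lebesgue. x \<notin> \<Omega> \<longrightarrow> u x = 0) \<longrightarrow>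
     ennreal c * (\<integral>\<^sup>+x. indicator \<Omega> x * ennreal (\<bar>u x\<bar> powr p) \<partial>lebesgue) \<le> gagliardo s p u"
    and op: "open \<Omega>" and bnn: "\<forall>x\<in>\<Omega>. b x \<ge> 0" and mpos: "emeasure lebesgue \<Omega> > 0"
    and q: "q > p - 1" and p: "p > 1"
  shows "c \<le> lam * M powr (q + 1 - p)"
proof -
  define M' where "M' = M powr (q + 1 - p)"
  have Om: "\<Omega> \<in> sets lebesgue" using op by simp
  have W: "v \<in> W0 s p \<Omega>" and vpos: "AE x in lebesgue. x \<in> \<Omega> \<longrightarrow> v x > 0"
    and wf: "\<And>\<phi>. \<phi> \<in> W0 s p \<Omega> \<Longrightarrow> set_integrable lebesgue \<Omega> (\<lambda>x. (lam * v x powr q - b x * v x powr r) * \<phi> x) \<and>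
        frac_pLap s p v \<phi> = (LINT x:\<Omega>|lebesgue. (lam * v x powr q - b x * v x powr r) * \<phi> x)"
    using ws unfolding weak_sol_def by auto
  have vm: "v \<in> borel_measurable lebesgue" and vint: "integrable lebesgue (\<lambda>x. \<bar>v x\<bar> powr p)"
    and v0: "AE x in lebesgue. x \<notin> \<Omega> \<longrightarrow> v x = 0" and gfin: "gagliardo s p v < \<infinity>"
    using W unfolding W0_def by auto
  have vbd: "AE x in lebesgue. x \<in> \<Omega> \<longrightarrow> \<bar>v x\<bar> \<le> M"
    using esssup_AE[of "\<lambda>x. ereal (indicator \<Omega> x * \<bar>v x\<bar>)" lebesgue]
  proof eventually_elim
    case (elim x)
    show ?case
    proof
      assume xO: "x \<in> \<Omega>"
      have "ereal (indicator \<Omega> x * \<bar>v x\<bar>) \<le> ereal M"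
        using elim Mb unfolding Linf_norm_def by (rule order_trans)
      thus "\<bar>v x\<bar> \<le> M" using xO by simp
    qed
  qed
  define I where "I = (LINT x:\<Omega>|lebesgue. \<bar>v x\<bar> powr p)"
  have sI: "set_integrable lebesgue \<Omega> (\<lambda>x. \<bar>v x\<bar> powr p)"
    unfolding set_integrable_def using integrable_mult_indicator[OF Om vint] .
  have nnI: "(\<integral>\<^sup>+x. indicator \<Omega> x * ennreal (\<bar>v x\<bar> powr p) \<partial>lebesgue) = ennreal I"
  proof -
    have "(\<integral>\<^sup>+x. indicator \<Omega> x * ennreal (\<bar>v x\<bar> powr p) \<partial>lebesgue)
        = (\<integral>\<^sup>+x. ennreal (indicator \<Omega> x *\<^sub>R \<bar>v x\<bar> powr p) \<partial>lebesgue)"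
      by (intro nn_integral_cong) (auto simp: indicator_def)
    also have "\<dots> = ennreal I" unfolding I_def set_lebesgue_integral_def
      using sI unfolding set_integrable_def by (intro nn_integral_eq_integral) auto
    finally show ?thesis .
  qed
  have I0: "I \<ge> 0" unfolding I_def set_lebesgue_integral_def by (intro integral_nonneg_AE) (auto simp: indicator_def)
  have Ipos: "I > 0"
  proof (rule ccontr)
    assume "\<not> I > 0"
    hence "I = 0" using I0 by simp
    hence "AE x in lebesgue. indicator \<Omega> x *\<^sub>R \<bar>v x\<bar> powr p = 0"
      using integral_nonneg_eq_0_iff_AE[of lebesgue "\<lambda>x. indicator \<Omega> x *\<^sub>R \<bar>v x\<bar> powr p"] sI
      unfolding I_def set_lebesgue_integral_def set_integrable_def by auto
    hence "AE x in lebesgue. x \<notin> \<Omega>" using vpos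
      by eventually_elim (auto simp: indicator_def)
    hence "emeasure lebesgue \<Omega> = 0"
      using AE_iff_measurable[OF Om, of "\<lambda>x. x \<notin> \<Omega>"] by auto
    thus False using mpos by simp
  qed
  define G where "G = (\<lambda>z::'a\<times>'a. \<bar>v (fst z) - v (snd z)\<bar> powr p / norm (fst z - snd z) powr (real DIM('a) + s * p))"
  have Gm: "G \<in> borel_measurable (lebesgue \<Otimes>\<^sub>M lebesgue)" unfolding G_def by (rule meas_F[OF vm])
  have fr: "frac_pLap s p v v = integral\<^sup>L (lebesgue \<Otimes>\<^sub>M lebesgue) G"
    unfolding frac_pLap_def G_def
  proof (intro Bochner_Integration.integral_cong refl)
    fix z :: "'a \<times> 'a"
    define t where "t = v (fst z) - v (snd z)"
    have "\<bar>t\<bar> powr (p - 2) * t * t = \<bar>t\<bar> powr p"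
    proof (cases "t = 0")
      case False
      have "\<bar>t\<bar> powr (p - 2) * t * t = \<bar>t\<bar> powr (p - 2) * \<bar>t\<bar> powr 2"
      proof -
        have "t * t = \<bar>t\<bar> powr 2" using False by (simp add: powr_numeral power2_eq_square)
        thus ?thesis by (simp add: mult.assoc)
      qed
      also have "\<dots> = \<bar>t\<bar> powr (p - 2 + 2)" by (rule powr_add[symmetric])
      also have "\<dots> = \<bar>t\<bar> powr p" by simp
      finally show ?thesis .
    qed (use p in simp)
    thus "\<bar>v (fst z) - v (snd z)\<bar> powr (p - 2) * (v (fst z) - v (snd z)) * (v (fst z) - v (snd z)) /
        norm (fst z - snd z) powr (real DIM('a) + s * p) =
        \<bar>v (fst z) - v (snd z)\<bar> powr p / norm (fst z - snd z) powr (real DIM('a) + s * p)"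
      unfolding t_def by simp
  qed
  have gag: "gagliardo s p v = ennreal (frac_pLap s p v v)"
  proof -
    have "frac_pLap s p v v = enn2real (gagliardo s p v)"
      unfolding fr gagliardo_def G_def using Gm unfolding G_def
      by (intro integral_eq_nn_integral) auto
    thus ?thesis using gfin by simp
  qed
  have fr0: "frac_pLap s p v v \<ge> 0"
    unfolding fr by (intro integral_nonneg_AE) (auto simp: G_def)
  have rhs: "frac_pLap s p v v \<le> lam * M' * I"
  proof -
    have w: "set_integrable lebesgue \<Omega> (\<lambda>x. (lam * v x powr q - b x * v x powr r) * v x)"
      and e: "frac_pLap s p v v = (LINT x:\<Omega>|lebesgue. (lam * v x powr q - b x * v x powr r) * v x)"
      using wf[OF W] by auto
    have "(LINT x:\<Omega>|lebesgue. (lam * v x powr q - b x * v x powr r) * v x)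
        \<le> (LINT x:\<Omega>|lebesgue. lam * M' * \<bar>v x\<bar> powr p)"
    proof (rule set_integral_mono_AE[OF w])
      show "set_integrable lebesgue \<Omega> (\<lambda>x. lam * M' * \<bar>v x\<bar> powr p)"
        using sI by (rule set_integrable_mult_right)
      show "AE x\<in>\<Omega> in lebesgue. (lam * v x powr q - b x * v x powr r) * v x \<le> lam * M' * \<bar>v x\<bar> powr p"
        using vpos vbd
      proof eventually_elim
        case (elim x)
        show ?case
        proof
          assume xO: "x \<in> \<Omega>"
          have vx: "v x > 0" "v x \<le> M" using elim xO by auto
          have "(lam * v x powr q - b x * v x powr r) * v x \<le> lam * v x powr q * v x"
            using vx bnn xO lam by (simp add: algebra_simps)
          also have "lam * v x powr q * v x = lam * (v x powr (q + 1 - p) * v x powr p)"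
          proof -
            have "v x powr q * v x = v x powr q * v x powr 1" using vx by simp
            also have "\<dots> = v x powr (q + 1)" by (rule powr_add[symmetric])
            also have "\<dots> = v x powr ((q + 1 - p) + p)" by simp
            also have "\<dots> = v x powr (q + 1 - p) * v x powr p" by (rule powr_add)
            finally show ?thesis by simp
          qed
          also have "\<dots> \<le> lam * (M' * v x powr p)"
            unfolding M'_def using vx q lam
            by (intro mult_left_mono mult_right_mono powr_mono2) auto
          finally show "(lam * v x powr q - b x * v x powr r) * v x \<le> lam * M' * \<bar>v x\<bar> powr p"
            using vx by simp
        qed
      qed
    qed
    also have "\<dots> = lam * M' * I" unfolding I_def by (rule set_integral_mult_right)
    finally show ?thesis using e by simp
  qed
  have "ennreal (c * I) \<le> ennreal (frac_pLap s p v v)"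
    using P vm v0 nnI gag cpos I0 by (auto simp: ennreal_mult'[symmetric])
  hence "c * I \<le> lam * M' * I" using fr0 rhs by simp
  thus ?thesis using Ipos unfolding M'_def by simp
qed
theorem theorem2p6:
  fixes \<Omega> \<Omega>0 :: "'a::euclidean_space set" and b :: "'a \<Rightarrow> real"
    and s p q r :: real and u :: "real \<Rightarrow> 'a \<Rightarrow> real"
  assumes dim: "DIM('a) \<ge> 2"
    and dom: "open \<Omega>" "connected \<Omega>" "bounded \<Omega>" "C11_open \<Omega>"
    and sp: "0 < s" "s < 1" "1 < p"
    and r: "r > p - 1"
    and b_meas: "set_borel_measurable lebesgue \<Omega> b"
    and b_bdd: "\<exists>C. AE x in lebesgue. x \<in> \<Omega> \<longrightarrow> \<bar>b x\<bar> \<le> C"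
    and b_nonneg: "\<forall>x\<in>\<Omega>. b x \<ge> 0"
    and b_nz: "\<not> (AE x in lebesgue. x \<in> \<Omega> \<longrightarrow> b x = 0)"
    and b_zero: "{x \<in> \<Omega>. b x = 0} = closure \<Omega>0"
    and Om0: "\<Omega>0 \<subseteq> \<Omega>" "C11_open \<Omega>0" "emeasure lebesgue \<Omega>0 > 0"
    and q: "q > p - 1"
    and Sig_ne: "Sigma_q s p q r b \<Omega> \<noteq> {}"
    and Sig_inf: "Inf (Sigma_q s p q r b \<Omega>) = 0"
    and sols: "\<forall>lam\<in>Sigma_q s p q r b \<Omega>. weak_sol s p q r b \<Omega> lam (u lam)"
  shows "((\<lambda>lam. Linf_norm \<Omega> (u lam)) \<longlongrightarrow> \<infinity>) (at 0 within Sigma_q s p q r b \<Omega>)"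
proof -
  have p0: "p > 0" using sp by simp
  obtain c where c: "c > 0" "\<forall>u. u \<in> borel_measurable lebesgue \<longrightarrow> (AE x in lebesgue. x \<notin> \<Omega> \<longrightarrow> u x = 0) \<longrightarrow>
     ennreal c * (\<integral>\<^sup>+x. indicator \<Omega> x * ennreal (\<bar>u x\<bar> powr p) \<partial>lebesgue) \<le> gagliardo s p u"
    using poincare[OF dom(3) dom(1) sp(1) p0] by blast
  have mpos: "emeasure lebesgue \<Omega> > 0"
  proof -
    have "emeasure lebesgue \<Omega>0 \<le> emeasure lebesgue \<Omega>"
      using Om0(1) dom(1) by (intro emeasure_mono) auto
    thus ?thesis using Om0(3) by simp
  qed
  show ?thesis unfolding tendsto_PInfty
  proof
    fix R :: real
    define M where "M = max R 1"
    define M' where "M' = M powr (q + 1 - p)"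
    have M0: "M > 0" unfolding M_def by simp
    have M'0: "M' > 0" unfolding M'_def using M0 by simp
    show "eventually (\<lambda>lam. ereal R < Linf_norm \<Omega> (u lam)) (at 0 within Sigma_q s p q r b \<Omega>)"
      unfolding eventually_at
    proof (intro exI[of _ "c / M'"] conjI ballI impI)
      show "c / M' > 0" using c(1) M'0 by simp
      fix lam assume lamS: "lam \<in> Sigma_q s p q r b \<Omega>" and ld: "lam \<noteq> 0 \<and> dist lam 0 < c / M'"
      have lam0: "lam > 0" using lamS unfolding Sigma_q_def by simp
      have ws: "weak_sol s p q r b \<Omega> lam (u lam)" using sols lamS by blast
      show "ereal R < Linf_norm \<Omega> (u lam)"
      proof (rule ccontr)
        assume "\<not> ereal R < Linf_norm \<Omega> (u lam)"
        hence "Linf_norm \<Omega> (u lam) \<le> ereal M"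
          using order_trans[of _ "ereal R" "ereal M"] unfolding M_def by (simp add: not_less)
        from key[OF ws lam0 this M0 c(1) c(2) dom(1) b_nonneg mpos q sp(3)]
        have "c \<le> lam * M'" unfolding M'_def .
        moreover have "lam * M' < c" using ld lam0 M'0 by (simp add: dist_real_def pos_less_divide_eq)
        ultimately show False by simp
      qed
    qed
  qed
qed

end
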